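(* Let $n_1<n_2<n_3$ be positive integers with $\gcd(n_1,n_2,n_3)=1$ minimally generating a nonsymmetric numerical semigroup $S$, with $\gcd(\delta_1,\delta_3)=1$. Let $\mathbf x\in\{\boldsymbol\lambda,\boldsymbol\mu\}$ and let $1\le i\le\max\{\delta_1,\delta_3\}$ be such that the B\'ezout couple $\mathbf x_i$ (of type $\mathbf x$) is reducible. Then there exists a positive integer $l<i$ such that $\tau_{\mathbf x_l}^+\le\tau_{\mathbf x_i}^+$ (componentwise), where $\mathbf x_l$ is the B\'ezout couple of $l$ of the same type.
   Context: $S=\langle n_1,n_2,n_3\rangle$; minimally generated means no $n_i$ lies in the submonoid generated by the other two; $S$ is symmetric if, with $F=\max(\mathbb Z\setminus S)$, $x\in\mathbb Z\setminus S$ implies $F-x\in S$. For $\{i,j,k\}=\{1,2,3\}$, $c_i=\min\{c\in\mathbb Z^+: cn_i\in\langle n_j,n_k\rangle\}$ and, $S$ being nonsymmetric, $r_{ij},r_{ik}$ are the unique positive integers with $c_in_i=r_{ij}n_j+r_{ik}n_k$; moreover $c_i=r_{ji}+r_{ki}$. Set $\delta_1=c_1-r_{12}-r_{13}>0$, $\delta_3=r_{31}+r_{32}-c_3>0$, $\mathbf v_1=(c_1,-r_{12},-r_{13})$, $\mathbf v_3=(r_{31},r_{32},-c_3)$. For $i\in\{1,\ldots,\max\{\delta_1,\delta_3\}\}$: $\boldsymbol\lambda_i$ is the unique $(a,b)\in\mathbb Z^2$ with $a\delta_1+b\delta_3=i$, $0<b\le\delta_1$; $\boldsymbol\mu_i$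 is the unique $(a,b)$ with $a\delta_1+b\delta_3=i$, $0<a\le\delta_3$. $\boldsymbol\lambda_i$ is reducible if $\boldsymbol\lambda_i=\boldsymbol\lambda_j+\boldsymbol\lambda_k$ for some $j,k\in\{1,\ldots,\max\{\delta_1,\delta_3\}\}$, and similarly for $\boldsymbol\mu_i$. For $(a,b)\in\mathbb Z^2$, $\tau_{(a,b)}=a\mathbf v_1+b\mathbf v_3\in\mathbb Z^3$. For $\mathbf z\in\mathbb Z^3$, $\mathbf z^+,\mathbf z^-\in\mathbb N^3$ are the unique vectors with $\mathbf z=\mathbf z^+-\mathbf z^-$ and $\mathbf z^+\cdot\mathbf z^-=0$. *)

theory Defs
  imports Main
begin

definition sg3 :: "nat \<Rightarrow> nat \<Rightarrow> nat \<Rightarrow> int set" where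
  "sg3 n1 n2 n3 = {int (a*n1 + b*n2 + c*n3) | a b c. True}"

definition gen2 :: "nat \<Rightarrow> nat \<Rightarrow> nat set" where
  "gen2 a b = {x*a + y*b | x y. True}"

definition minimally_generated :: "nat \<Rightarrow> nat \<Rightarrow> nat \<Rightarrow> bool" where
  "minimally_generated n1 n2 n3 \<longleftrightarrow>
     n1 \<notin> gen2 n2 n3 \<and> n2 \<notin> gen2 n1 n3 \<and> n3 \<notin> gen2 n1 n2"

definition symmetric_sg :: "int set \<Rightarrow> bool" where
  "symmetric_sg S \<longleftrightarrow> (\<forall>x. x \<notin> S \<longrightarrow> (GREATEST y. y \<notin> S) - x \<in> S)"

definition cc :: "nat \<Rightarrow> nat \<Rightarrow> nat \<Rightarrow> nat" where
  "cc ni nj nk = (LEAST c. 0 < c \<and> c * ni \<in> gen2 nj nk)"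

definition rr :: "nat \<Rightarrow> nat \<Rightarrow> nat \<Rightarrow> nat \<times> nat" where
  "rr ni nj nk = (THE (a, b). 0 < a \<and> 0 < b \<and> cc ni nj nk * ni = a * nj + b * nk)"

definition delta1 :: "nat \<Rightarrow> nat \<Rightarrow> nat \<Rightarrow> int" where
  "delta1 n1 n2 n3 = int (cc n1 n2 n3) - int (fst (rr n1 n2 n3)) - int (snd (rr n1 n2 n3))"

definition delta3 :: "nat \<Rightarrow> nat \<Rightarrow> nat \<Rightarrow> int" where
  "delta3 n1 n2 n3 = int (fst (rr n3 n1 n2)) + int (snd (rr n3 n1 n2)) - int (cc n3 n1 n2)"

definition v1 :: "nat \<Rightarrow> nat \<Rightarrow> nat \<Rightarrow> int \<times> int \<times> int" where
  "v1 n1 n2 n3 = (int (cc n1 n2 n3), - int (fst (rr n1 n2 n3)), - int (snd (rr n1 n2 n3)))"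

definition v3 :: "nat \<Rightarrow> nat \<Rightarrow> nat \<Rightarrow> int \<times> int \<times> int" where
  "v3 n1 n2 n3 = (int (fst (rr n3 n1 n2)), int (snd (rr n3 n1 n2)), - int (cc n3 n1 n2))"

definition lam :: "nat \<Rightarrow> nat \<Rightarrow> nat \<Rightarrow> int \<Rightarrow> int \<times> int" where
  "lam n1 n2 n3 i = (THE (a, b). a * delta1 n1 n2 n3 + b * delta3 n1 n2 n3 = i
                        \<and> 0 < b \<and> b \<le> delta1 n1 n2 n3)"

definition mu :: "nat \<Rightarrow> nat \<Rightarrow> nat \<Rightarrow> int \<Rightarrow> int \<times> int" where
  "mu n1 n2 n3 i = (THE (a, b). a * delta1 n1 n2 n3 + b * delta3 n1 n2 n3 = i
                        \<and> 0 < a \<and> a \<le> delta3 n1 n2 n3)"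

definition reducible :: "(int \<Rightarrow> int \<times> int) \<Rightarrow> int \<Rightarrow> int \<Rightarrow> bool" where
  "reducible x m i \<longleftrightarrow> (\<exists>j\<in>{1..m}. \<exists>k\<in>{1..m}.
      x i = (fst (x j) + fst (x k), snd (x j) + snd (x k)))"

definition tau :: "nat \<Rightarrow> nat \<Rightarrow> nat \<Rightarrow> int \<times> int \<Rightarrow> int \<times> int \<times> int" where
  "tau n1 n2 n3 ab = (case ab of (a, b) \<Rightarrow>
     (case v1 n1 n2 n3 of (p1, p2, p3) \<Rightarrow> case v3 n1 n2 n3 of (q1, q2, q3) \<Rightarrow>
        (a*p1 + b*q1, a*p2 + b*q2, a*p3 + b*q3)))"

definition pos_part :: "int \<times> int \<times> int \<Rightarrow> int \<times> int \<times> int" where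
  "pos_part z = (case z of (a, b, c) \<Rightarrow> (max a 0, max b 0, max c 0))"

definition le3 :: "int \<times> int \<times> int \<Rightarrow> int \<times> int \<times> int \<Rightarrow> bool" where
  "le3 y z \<longleftrightarrow> fst y \<le> fst z \<and> fst (snd y) \<le> fst (snd z) \<and> snd (snd y) \<le> snd (snd z)"

end

theory Submission
  imports Defs
begin


lemma gen2_comm: "gen2 a b = gen2 b a"
  unfolding gen2_def by (auto; metis add.commute)

lemma cc_comm: "cc x y z = cc x z y"
  unfolding cc_def by (simp add: gen2_comm)

lemma sg3_perm1: "sg3 a b c = sg3 b a c"
  unfolding sg3_def by (auto; metis add.commute)

lemma sg3_perm2: "sg3 a b c = sg3 a c b"
  unfolding sg3_def by (auto; metis add.commute add.assoc)

lemma cc_props: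
  assumes "0 < x" "0 < y"
  shows "0 < cc x y z" "cc x y z * x \<in> gen2 y z"
    "\<And>c. 0 < c \<Longrightarrow> c < cc x y z \<Longrightarrow> c * x \<notin> gen2 y z"
proof -
  have ex: "0 < y \<and> y * x \<in> gen2 y z"
    using assms unfolding gen2_def by (auto intro: exI[of _ x] exI[of _ 0])
  have "0 < cc x y z \<and> cc x y z * x \<in> gen2 y z"
    unfolding cc_def by (rule LeastI[of "\<lambda>c. 0 < c \<and> c * x \<in> gen2 y z", OF ex])
  then show "0 < cc x y z" "cc x y z * x \<in> gen2 y z" by auto
  fix c assume "0 < c" "c < cc x y z"
  then show "c * x \<notin> gen2 y z" unfolding cc_def using not_less_Least by blast
qed

lemma cc_le:
  assumes "0 < c" "c * x \<in> gen2 y z"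
  shows "cc x y z \<le> c"
  unfolding cc_def by (rule Least_le) (use assms in auto)

lemma sg3_mem:
  fixes A B C :: int
  assumes "A \<ge> 0" "B \<ge> 0" "C \<ge> 0"
  shows "A * int x + B * int y + C * int z \<in> sg3 x y z"
  unfolding sg3_def
  apply (rule CollectI)
  apply (rule exI[of _ "nat A"], rule exI[of _ "nat B"], rule exI[of _ "nat C"])
  using assms by simp

lemma sg3_nonneg: "w \<in> sg3 x y z \<Longrightarrow> w \<ge> 0"
  unfolding sg3_def by auto

lemma sg3_elim:
  assumes "w \<in> sg3 x y z"
  obtains A B C :: nat where "w = int A * int x + int B * int y + int C * int z"
  using assms unfolding sg3_def by auto




lemma int_decomp:
  fixes p q w :: int
  assumes "0 < q" "gcd p q = 1"
  shows "\<exists>\<alpha> \<beta>. w = \<alpha> * p + \<beta> * q \<and> 0 \<le> \<alpha> \<and> \<alpha> < q"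
proof -
  obtain u v where uv: "u * p + v * q = 1" using bezout_int[of p q] assms by auto
  define \<alpha> where "\<alpha> = (w * u) mod q"
  have a1: "0 \<le> \<alpha>" "\<alpha> < q" using assms unfolding \<alpha>_def by auto
  have "w * u = q * (w * u div q) + \<alpha>" unfolding \<alpha>_def by simp
  then have "w - \<alpha> * p = w * (u * p + v * q) - (w * u - q * (w * u div q)) * p"
    using uv by simp
  also have "\<dots> = q * (w * v + (w * u div q) * p)" by (simp add: algebra_simps)
  finally have "w = \<alpha> * p + (w * v + (w * u div q) * p) * q" by (simp add: algebra_simps)
  then show ?thesis using a1 by blast
qed

lemma dvd_small_zero:
  fixes q t :: int
  assumes "q dvd t" "\<bar>t\<bar> < q"
  shows "t = 0"
  using assms dvd_imp_le_int by force

lemma sym_lemma: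
  fixes x y z k :: nat
  assumes xp: "0 < x" and yp: "0 < y" and zp: "0 < z" and g: "gcd x (gcd y z) = 1"
    and ck: "cc x y z * x = k * y"
  shows "symmetric_sg (sg3 x y z)"
proof -
  define S where "S = sg3 x y z"
  define d where "d = gcd x y"
  define x' where "x' = x div d"
  define y' where "y' = y div d"
  have dp: "0 < d" using xp d_def by simp
  have xd: "x = d * x'" unfolding x'_def d_def by simp
  have yd: "y = d * y'" unfolding y'_def d_def by simp
  have y'p: "0 < y'" using yd yp by (cases y') auto
  have x'p: "0 < x'" using xd xp by (cases x') auto
  have cop: "coprime x' y'" unfolding x'_def y'_def d_def using div_gcd_coprime[of x y] xp by simp
  have copdz: "coprime d z"
  proof -
    have "gcd d z = 1" unfolding d_def using g by (simp add: gcd.assoc)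
    then show ?thesis by (simp add: coprime_iff_gcd_eq_1)
  qed
  define c where "c = cc x y z"
  have "d * (c * x') = d * (k * y')" using ck xd yd unfolding c_def by (simp add: ac_simps)
  then have "c * x' = k * y'" using dp by simp
  then have "y' dvd c * x'" by simp
  then have "y' dvd c" using cop by (simp add: coprime_dvd_mult_left_iff coprime_commute)
  moreover have "0 < c" unfolding c_def using cc_props(1)[OF xp yp] .
  ultimately have y'c: "y' \<le> c" by (simp add: dvd_imp_le)
  have minimal: "\<And>c'. 0 < c' \<Longrightarrow> c' < y' \<Longrightarrow> c' * x \<notin> gen2 y z"
    using cc_props(3)[OF xp yp] y'c unfolding c_def by (meson less_le_trans)
  define X where "X = int x" define Y where "Y = int y" define Z where "Z = int z"
  define D where "D = int d" define X' where "X' = int x'" define Y' where "Y' = int y'"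
  have XD: "X = D * X'" and YD: "Y = D * Y'" unfolding X_def D_def X'_def Y_def Y'_def
    using xd yd by simp_all
  have Dp: "0 < D" and Y'p: "0 < Y'" and X'p: "0 < X'" and Xp: "0 < X" and Yp: "0 < Y" and Zp: "0 < Z"
    using dp y'p x'p xp yp zp by (simp_all add: D_def Y'_def X'_def X_def Y_def Z_def)
  have gXY: "gcd X' Y' = 1" using cop unfolding X'_def Y'_def
    by (simp add: coprime_iff_gcd_eq_1[symmetric])
  have gDZ: "gcd Z D = 1" using copdz unfolding Z_def D_def
    by (simp add: coprime_iff_gcd_eq_1[symmetric] coprime_commute)
  \<comment> \<open>z lies in the semigroup generated by x', y'\<close>
  obtain \<alpha>0 \<beta>0 where ab0: "Z = \<alpha>0 * X' + \<beta>0 * Y'" "0 \<le> \<alpha>0" "\<alpha>0 < Y'"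
    using int_decomp[OF Y'p gXY, of Z] by blast
  have b0: "0 \<le> \<beta>0"
  proof (rule ccontr)
    assume nb: "\<not> 0 \<le> \<beta>0"
    have a0: "0 < \<alpha>0"
    proof (rule ccontr)
      assume "\<not> 0 < \<alpha>0"
      then have "\<alpha>0 = 0" using ab0 by simp
      then have "Z = \<beta>0 * Y'" using ab0 by simp
      then show False using nb Y'p Zp by (smt (verit) mult_neg_pos)
    qed
    have "\<alpha>0 * X = D * Z + (- \<beta>0) * Y" using ab0(1) XD YD by (simp add: algebra_simps)
    then have "int (nat \<alpha>0 * x) = int (nat (- \<beta>0) * y + d * z)"
      using a0 nb unfolding X_def Y_def Z_def D_def by simp
    then have "nat \<alpha>0 * x = nat (- \<beta>0) * y + d * z" by linarith
    then have "nat \<alpha>0 * x \<in> gen2 y z" unfolding gen2_def by blast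
    moreover have "nat \<alpha>0 < y'" using ab0 Y'_def by linarith
    ultimately show False using minimal a0 by simp
  qed
  have DZ: "D * Z = \<alpha>0 * X + \<beta>0 * Y" using ab0(1) XD YD by (simp add: algebra_simps)
  have nf: "\<exists>\<alpha> \<beta> \<gamma>. w = \<alpha> * X + \<beta> * Y + \<gamma> * Z \<and> 0 \<le> \<alpha> \<and> \<alpha> < Y' \<and> 0 \<le> \<gamma> \<and> \<gamma> < D" for w
  proof -
    obtain \<gamma> t where gt: "w = \<gamma> * Z + t * D" "0 \<le> \<gamma>" "\<gamma> < D"
      using int_decomp[OF Dp gDZ, of w] by blast
    obtain \<alpha> \<beta> where ab: "t = \<alpha> * X' + \<beta> * Y'" "0 \<le> \<alpha>" "\<alpha> < Y'"
      using int_decomp[OF Y'p gXY, of t] by blast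
    have "w = \<alpha> * X + \<beta> * Y + \<gamma> * Z" using gt ab XD YD by (simp add: algebra_simps)
    then show ?thesis using gt ab by blast
  qed
  have uniq: "\<alpha> = \<alpha>2 \<and> \<beta> = \<beta>2 \<and> \<gamma> = \<gamma>2"
    if e: "\<alpha> * X + \<beta> * Y + \<gamma> * Z = \<alpha>2 * X + \<beta>2 * Y + \<gamma>2 * Z"
      and b: "0 \<le> \<alpha>" "\<alpha> < Y'" "0 \<le> \<gamma>" "\<gamma> < D" "0 \<le> \<alpha>2" "\<alpha>2 < Y'" "0 \<le> \<gamma>2" "\<gamma>2 < D"
    for \<alpha> \<beta> \<gamma> \<alpha>2 \<beta>2 \<gamma>2
  proof -
    have "(\<gamma> - \<gamma>2) * Z = D * ((\<alpha>2 - \<alpha>) * X' + (\<beta>2 - \<beta>) * Y')"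
      using e XD YD by (simp add: algebra_simps)
    then have "D dvd (\<gamma> - \<gamma>2) * Z" by simp
    then have "D dvd (\<gamma> - \<gamma>2)" using gDZ
      by (metis coprime_commute coprime_dvd_mult_left_iff coprime_iff_gcd_eq_1)
    then have g: "\<gamma> = \<gamma>2" using dvd_small_zero[of D "\<gamma> - \<gamma>2"] b by linarith
    then have "D * ((\<alpha> - \<alpha>2) * X') = D * ((\<beta>2 - \<beta>) * Y')"
      using e XD YD by (simp add: algebra_simps)
    then have e2: "(\<alpha> - \<alpha>2) * X' = (\<beta>2 - \<beta>) * Y'" using Dp by simp
    then have "Y' dvd (\<alpha> - \<alpha>2) * X'" by simp
    then have "Y' dvd (\<alpha> - \<alpha>2)" using gXY
      by (metis coprime_commute coprime_dvd_mult_left_iff coprime_iff_gcd_eq_1)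
    then have a: "\<alpha> = \<alpha>2" using dvd_small_zero[of Y' "\<alpha> - \<alpha>2"] b by linarith
    then have "(\<beta>2 - \<beta>) * Y' = 0" using e2 by simp
    then have "\<beta> = \<beta>2" using Y'p by simp
    then show ?thesis using a g by simp
  qed
  have memb: "0 \<le> \<beta>"
    if w: "w \<in> S" "w = \<alpha> * X + \<beta> * Y + \<gamma> * Z" and b: "0 \<le> \<alpha>" "\<alpha> < Y'" "0 \<le> \<gamma>" "\<gamma> < D"
    for w \<alpha> \<beta> \<gamma>
  proof -
    obtain A B C :: nat where wABC: "w = int A * X + int B * Y + int C * Z"
      using sg3_elim w(1) unfolding S_def X_def Y_def Z_def by metis
    define C1 where "C1 = int C mod D" define C2 where "C2 = int C div D"
    have C2: "0 \<le> C2" unfolding C2_def using Dp by (simp add: pos_imp_zdiv_nonneg_iff)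
    have C1: "0 \<le> C1" "C1 < D" unfolding C1_def using Dp by auto
    have "int C = C1 + D * C2" unfolding C1_def C2_def by simp
    then have wA: "w = (int A + C2 * \<alpha>0) * X + (int B + C2 * \<beta>0) * Y + C1 * Z"
      using wABC DZ by (simp add: algebra_simps)
    define A' where "A' = int A + C2 * \<alpha>0"
    have A'p: "0 \<le> A'" unfolding A'_def using C2 ab0 by simp
    define A1 where "A1 = A' mod Y'" define A2 where "A2 = A' div Y'"
    have A1: "0 \<le> A1" "A1 < Y'" unfolding A1_def using Y'p by auto
    have A2: "0 \<le> A2" unfolding A2_def using A'p Y'p by (simp add: pos_imp_zdiv_nonneg_iff)
    have "A' = A1 + Y' * A2" unfolding A1_def A2_def by simp
    then have "w = A1 * X + (int B + C2 * \<beta>0 + A2 * X') * Y + C1 * Z"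
      using wA XD YD unfolding A'_def by (simp add: algebra_simps)
    then have "\<alpha> = A1 \<and> \<beta> = int B + C2 * \<beta>0 + A2 * X' \<and> \<gamma> = C1"
      using uniq[of \<alpha> \<beta> \<gamma> A1 "int B + C2 * \<beta>0 + A2 * X'" C1] w(2) b A1 C1 by simp
    then show ?thesis using C2 b0 A2 X'p by simp
  qed
  define F where "F = (Y' - 1) * X - Y + (D - 1) * Z"
  have FnS: "F \<notin> S"
  proof
    assume "F \<in> S"
    from memb[OF this, of "Y' - 1" "-1" "D - 1"] show False
      using Y'p Dp unfolding F_def by simp
  qed
  have key: "F - w \<in> S" if "w \<notin> S" for w
  proof -
    obtain \<alpha> \<beta> \<gamma> where r: "w = \<alpha> * X + \<beta> * Y + \<gamma> * Z" "0 \<le> \<alpha>" "\<alpha> < Y'" "0 \<le> \<gamma>" "\<gamma> < D"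
      using nf by blast
    have "\<beta> < 0"
    proof (rule ccontr)
      assume "\<not> \<beta> < 0"
      then have "w \<in> S" using sg3_mem[of \<alpha> \<beta> \<gamma> x y z] r unfolding S_def X_def Y_def Z_def by simp
      then show False using that by simp
    qed
    have "F - w = (Y' - 1 - \<alpha>) * X + (- 1 - \<beta>) * Y + (D - 1 - \<gamma>) * Z"
      unfolding F_def r(1) by (simp add: algebra_simps)
    moreover have "(Y' - 1 - \<alpha>) * X + (- 1 - \<beta>) * Y + (D - 1 - \<gamma>) * Z \<in> S"
      unfolding S_def X_def Y_def Z_def
      by (rule sg3_mem) (use r \<open>\<beta> < 0\<close> in auto)
    ultimately show ?thesis by simp
  qed
  have G: "(GREATEST y. y \<notin> S) = F"
  proof (rule Greatest_equality)
    show "F \<notin> S" by (rule FnS)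
    fix w assume "w \<notin> S"
    then have "F - w \<in> S" by (rule key)
    then show "w \<le> F" using sg3_nonneg unfolding S_def by fastforce
  qed
  show ?thesis unfolding symmetric_sg_def S_def[symmetric] G using key by blast
qed




lemma two_reps_false:
  fixes x y z a b a' b' :: nat
  assumes xp: "0 < x" and yp: "0 < y" and zp: "0 < z"
    and e1: "cc x y z * x = a * y + b * z" and e2: "cc x y z * x = a' * y + b' * z"
    and lt: "a' < a" and bp: "0 < b" and h: "\<forall>k. cc y x z * y \<noteq> k * z"
  shows False
proof -
  define c where "c = cc x y z"
  define c2 where "c2 = cc y x z"
  have "a * y + b * z = a' * y + b' * z" using e1 e2 by simp
  moreover obtain t where t: "a = a' + t" using lt less_imp_add_positive by blast
  ultimately have "t * y + b * z = b' * z" by (simp add: algebra_simps)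
  then have "(b' - b) * z = t * y" by (simp add: diff_mult_distrib)
  then have E: "(a - a') * y = (b' - b) * z" using t by simp
  have "(a - a') * y \<in> gen2 x z" unfolding gen2_def E by (rule CollectI, rule exI[of _ 0], auto)
  then have c2le: "c2 \<le> a - a'" unfolding c2_def using lt by (intro cc_le) auto
  have "c2 * y \<in> gen2 x z" unfolding c2_def using cc_props(2)[OF yp xp] .
  then obtain u v where uv: "c2 * y = u * x + v * z" unfolding gen2_def by auto
  have c2p: "0 < c2" unfolding c2_def using cc_props(1)[OF yp xp] .
  have up: "0 < u"
  proof (rule ccontr)
    assume "\<not> 0 < u" then have "c2 * y = v * z" using uv by simp
    then show False using h unfolding c2_def by blast
  qed
  show False
  proof (cases "u < c")
    case True
    have "(c - u) * x = (a - c2) * y + (b + v) * z"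
    proof -
      have 1: "(c - u) * x + u * x = c * x" using True by (simp add: add_mult_distrib[symmetric])
      have 2: "(a - c2) * y + c2 * y = a * y" using c2le lt by (simp add: add_mult_distrib[symmetric])
      have 3: "(b + v) * z = b * z + v * z" by (simp add: add_mult_distrib)
      have 4: "c * x = a * y + b * z" using e1 c_def by simp
      show ?thesis using 1 2 3 4 uv by linarith
    qed
    then have "(c - u) * x \<in> gen2 y z" unfolding gen2_def by blast
    then show False using cc_props(3)[OF xp yp, of "c - u"] True up unfolding c_def by simp
  next
    case False
    have "u * x \<ge> c * x" using False by simp
    moreover have "c * x = a * y + b * z" using e1 c_def by simp
    moreover have "a * y \<ge> c2 * y" using c2le lt by (intro mult_le_mono1) linarith
    moreover have "b * z > 0" using bp zp by simp
    ultimately show False using uv by linarith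
  qed
qed

lemma rr_props:
  fixes x y z :: nat
  assumes xp: "0 < x" and yp: "0 < y" and zp: "0 < z"
    and h1: "\<forall>k. cc x y z * x \<noteq> k * y" and h2: "\<forall>k. cc x y z * x \<noteq> k * z"
    and h3: "\<forall>k. cc y x z * y \<noteq> k * z" and h4: "\<forall>k. cc z x y * z \<noteq> k * y"
  shows "0 < fst (rr x y z) \<and> 0 < snd (rr x y z) \<and> cc x y z * x = fst (rr x y z) * y + snd (rr x y z) * z"
proof -
  define c where "c = cc x y z"
  define P where "P = (\<lambda>(a::nat, b::nat). 0 < a \<and> 0 < b \<and> c * x = a * y + b * z)"
  have "c * x \<in> gen2 y z" unfolding c_def using cc_props(2)[OF xp yp] .
  then obtain a b where ab: "c * x = a * y + b * z" unfolding gen2_def by auto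
  have ap: "0 < a"
  proof (rule ccontr)
    assume "\<not> 0 < a" then have "cc x y z * x = b * z" using ab unfolding c_def by simp
    then show False using h2 by blast
  qed
  have bp: "0 < b"
  proof (rule ccontr)
    assume "\<not> 0 < b" then have "cc x y z * x = a * y" using ab unfolding c_def by simp
    then show False using h1 by blast
  qed
  have ex1: "\<exists>!p. P p"
  proof (rule ex1I[of _ "(a, b)"])
    show "P (a, b)" unfolding P_def using ap bp ab by simp
    fix p assume "P p"
    then obtain a' b' where p: "p = (a', b')" "0 < a'" "0 < b'" "c * x = a' * y + b' * z"
      unfolding P_def by (cases p) auto
    have "a' = a"
    proof (rule ccontr)
      assume "a' \<noteq> a"
      then consider "a' < a" | "a < a'" by linarith
      then show False
      proof cases
        case 1
        show False by (rule two_reps_false[OF xp yp zp ab[unfolded c_def] p(4)[unfolded c_def] 1 bp h3])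
      next
        case 2
        obtain t where t: "a' = a + t" "0 < t" using 2 less_imp_add_positive by blast
        have "a * y + b * z = a' * y + b' * z" using ab p(4) by simp
        then have "b * z = t * y + b' * z" using t by (simp add: algebra_simps)
        then have "b' * z < b * z" using t yp by simp
        then have "b' < b" by (simp add: mult_less_cancel2)
        have e1: "cc x z y * x = b * z + a * y" using ab unfolding c_def by (simp add: cc_comm add.commute)
        have e2: "cc x z y * x = b' * z + a' * y" using p(4) unfolding c_def by (simp add: cc_comm add.commute)
        show False by (rule two_reps_false[OF xp zp yp e1 e2 \<open>b' < b\<close> ap h4])
      qed
    qed
    then have "b' * z = b * z" using ab p(4) by simp
    then have "b' = b" using zp by simp
    then show "p = (a, b)" using p \<open>a' = a\<close> by simp
  qed
  have "P (rr x y z)" unfolding rr_def P_def c_def[symmetric] using theI'[OF ex1[unfolded P_def]] .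
  then show ?thesis unfolding P_def c_def by (cases "rr x y z") auto
qed




lemma core:
  fixes N1 N2 N3 c1 r12 r13 c3 r31 r32 :: int
  assumes N1: "0 < N1" "N1 < N2" "N2 < N3"
    and pos: "0 < r12" "0 < r13" "0 < r31" "0 < r32" "0 < c1" "0 < c3"
    and E1: "c1 * N1 = r12 * N2 + r13 * N3" and E3: "c3 * N3 = r31 * N1 + r32 * N2"
  shows "0 < c1 - r12 - r13" "0 < r31 + r32 - c3"
    "(r31 + r32 - c3) * r13 \<le> (c1 - r12 - r13) * c3"
    "(c1 - r12 - r13) * r31 \<le> (r31 + r32 - c3) * c1"
proof -
  have "r12 * N1 < r12 * N2" using pos N1 by simp
  moreover have "r13 * N1 < r13 * N3" using pos N1 by simp
  ultimately have "(r12 + r13) * N1 < c1 * N1" using E1 by (simp add: algebra_simps)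
  then show "0 < c1 - r12 - r13" using N1 by (simp add: mult_less_cancel_right)
  have "r31 * N1 < r31 * N3" using pos N1 by simp
  moreover have "r32 * N2 < r32 * N3" using pos N1 by simp
  ultimately have "c3 * N3 < (r31 + r32) * N3" using E3 by (simp add: algebra_simps)
  then show "0 < r31 + r32 - c3" using N1 by (simp add: mult_less_cancel_right)
  define X where "X = c1 * c3 - r13 * r31"
  define Y where "Y = c3 * r12 + r13 * r32"
  define Z where "Z = r32 * c1 + r12 * r31"
  have XY: "X * N1 = Y * N2"
  proof -
    have "c3 * (c1 * N1) = c3 * (r12 * N2 + r13 * N3)" using E1 by simp
    moreover have "r13 * (c3 * N3) = r13 * (r31 * N1 + r32 * N2)" using E3 by simp
    ultimately show ?thesis unfolding X_def Y_def by (simp add: algebra_simps)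
  qed
  have XZ: "X * N3 = Z * N2"
  proof -
    have "c1 * (c3 * N3) = c1 * (r31 * N1 + r32 * N2)" using E3 by simp
    moreover have "r31 * (c1 * N1) = r31 * (r12 * N2 + r13 * N3)" using E1 by simp
    ultimately show ?thesis unfolding X_def Z_def by (simp add: algebra_simps)
  qed
  have Y0: "0 \<le> Y" "0 \<le> Z" unfolding Y_def Z_def using pos by simp_all
  have "Y * N1 \<le> Y * N2" using Y0 N1 by (simp add: mult_left_mono)
  then have "Y * N1 \<le> X * N1" using XY by simp
  then have "Y \<le> X" using N1 by (simp add: mult_le_cancel_right)
  then show "(r31 + r32 - c3) * r13 \<le> (c1 - r12 - r13) * c3"
    unfolding X_def Y_def by (simp add: algebra_simps)
  have "Z * N2 \<le> Z * N3" using Y0 N1 by (simp add: mult_left_mono)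
  then have "X * N3 \<le> Z * N3" using XZ by simp
  then have "X \<le> Z" using N1 by (simp add: mult_le_cancel_right)
  then show "(c1 - r12 - r13) * r31 \<le> (r31 + r32 - c3) * c1"
    unfolding X_def Z_def by (simp add: algebra_simps)
qed

lemma lam_ex1:
  fixes D1 D3 i :: int
  assumes "0 < D1" "gcd D1 D3 = 1"
  shows "\<exists>!p. (\<lambda>(a, b). a * D1 + b * D3 = i \<and> 0 < b \<and> b \<le> D1) p"
proof -
  obtain b0 a0 where e: "i = b0 * D3 + a0 * D1" "0 \<le> b0" "b0 < D1"
    using int_decomp[OF assms(1), of D3 i] assms(2) by (metis gcd.commute)
  define b where "b = (if b0 = 0 then D1 else b0)"
  define a where "a = (if b0 = 0 then a0 - D3 else a0)"
  have ex: "a * D1 + b * D3 = i \<and> 0 < b \<and> b \<le> D1"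
    using e assms(1) unfolding a_def b_def by (auto simp: algebra_simps)
  show ?thesis
  proof (rule ex1I[of _ "(a, b)"])
    show "(\<lambda>(a, b). a * D1 + b * D3 = i \<and> 0 < b \<and> b \<le> D1) (a, b)" using ex by simp
    fix p assume "(\<lambda>(a, b). a * D1 + b * D3 = i \<and> 0 < b \<and> b \<le> D1) p"
    then obtain a' b' where p: "p = (a', b')" "a' * D1 + b' * D3 = i" "0 < b'" "b' \<le> D1"
      by (cases p) auto
    have "(b' - b) * D3 = (a - a') * D1" using p ex by (simp add: algebra_simps)
    then have "D1 dvd (b' - b) * D3" by (metis dvd_triv_right)
    then have "D1 dvd (b' - b)" using assms(2)
      by (metis coprime_dvd_mult_left_iff coprime_iff_gcd_eq_1)
    then have "b' = b" using dvd_small_zero[of D1 "b' - b"] p ex by linarith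
    then have "a' * D1 = a * D1" using p ex by (smt (verit))
    then have "a' = a" using assms(1) by simp
    then show "p = (a, b)" using p \<open>b' = b\<close> by simp
  qed
qed

lemma mu_ex1:
  fixes D1 D3 i :: int
  assumes "0 < D3" "gcd D1 D3 = 1"
  shows "\<exists>!p. (\<lambda>(a, b). a * D1 + b * D3 = i \<and> 0 < a \<and> a \<le> D3) p"
proof -
  have "gcd D3 D1 = 1" using assms(2) by (simp add: gcd.commute)
  from lam_ex1[OF assms(1) this, of i] obtain q where
    q: "(\<lambda>(a, b). a * D3 + b * D1 = i \<and> 0 < b \<and> b \<le> D3) q"
    and u: "\<And>q'. (\<lambda>(a, b). a * D3 + b * D1 = i \<and> 0 < b \<and> b \<le> D3) q' \<Longrightarrow> q' = q" by blast
  show ?thesis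
  proof (rule ex1I[of _ "(snd q, fst q)"])
    show "(\<lambda>(a, b). a * D1 + b * D3 = i \<and> 0 < a \<and> a \<le> D3) (snd q, fst q)"
      using q by (cases q) (simp add: add.commute)
    fix p assume "(\<lambda>(a, b). a * D1 + b * D3 = i \<and> 0 < a \<and> a \<le> D3) p"
    then have "(\<lambda>(a, b). a * D3 + b * D1 = i \<and> 0 < b \<and> b \<le> D3) (snd p, fst p)"
      by (cases p) (simp add: add.commute)
    then have "(snd p, fst p) = q" by (rule u)
    then show "p = (snd q, fst q)" by auto
  qed
qed

definition Tf :: "int \<Rightarrow> int \<Rightarrow> int \<Rightarrow> int \<Rightarrow> int \<Rightarrow> int \<Rightarrow> int \<times> int \<Rightarrow> int \<times> int \<times> int" where
  "Tf c1 r12 r13 c3 r31 r32 p = (case p of (a, b) \<Rightarrow>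
     (a * c1 + b * r31, a * (- r12) + b * r32, a * (- r13) + b * (- c3)))"

lemma pick_lam:
  fixes p1 p2 p3 q1 q2 q3 :: int
  assumes "0 \<le> p2" "0 \<le> q2" "p3 \<le> 0" "q3 \<le> 0"
  shows "le3 (pos_part (p1, p2, p3)) (pos_part (p1 + q1, p2 + q2, p3 + q3)) \<or>
         le3 (pos_part (q1, q2, q3)) (pos_part (p1 + q1, p2 + q2, p3 + q3))"
  using assms unfolding le3_def pos_part_def by auto

lemma pick_mu:
  fixes p1 p2 p3 q1 q2 q3 :: int
  assumes "0 \<le> p1" "0 \<le> q1" "p2 \<le> 0" "q2 \<le> 0"
  shows "le3 (pos_part (p1, p2, p3)) (pos_part (p1 + q1, p2 + q2, p3 + q3)) \<or>
         le3 (pos_part (q1, q2, q3)) (pos_part (p1 + q1, p2 + q2, p3 + q3))"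
  using assms unfolding le3_def pos_part_def by auto

lemma lam_signs:
  fixes c1 r12 r13 c3 r31 r32 D1 D3 a b t :: int
  assumes nn: "0 \<le> r12" "0 \<le> r13" "0 \<le> r32" "0 \<le> c3"
    and D: "0 < D1" "0 < D3" "D3 * r13 \<le> D1 * c3"
    and t: "a * D1 + b * D3 = t" "1 \<le> t" "t \<le> max D1 D3" "0 < b" "b \<le> D1"
  shows "0 \<le> a * (- r12) + b * r32" "a * (- r13) + b * (- c3) \<le> 0"
proof -
  have a0: "a \<le> 0"
  proof (cases "D1 \<ge> D3")
    case True
    then have "a * D1 < 1 * D1" using t D by (smt (verit) mult_le_cancel_right1)
    then show ?thesis using D by (simp add: mult_less_cancel_right)
  next
    case False
    then have "t \<le> b * D3" using t D by (smt (verit) mult_le_cancel_right1)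
    then have "a * D1 \<le> 0" using t by simp
    then show ?thesis using D by (smt (verit) mult_pos_pos)
  qed
  have "0 \<le> (- a) * r12" using a0 nn by (simp add: mult_nonpos_nonneg)
  moreover have "0 \<le> b * r32" using t nn by simp
  ultimately show "0 \<le> a * (- r12) + b * r32" by simp
  have A: "(- a) * D1 \<le> b * D3" using t by linarith
  have "(- a) * D1 * r13 \<le> b * D3 * r13" using mult_right_mono[OF A nn(2)] .
  also have "\<dots> = b * (D3 * r13)" by simp
  also have "\<dots> \<le> b * (D1 * c3)" using D t by (simp add: mult_left_mono)
  finally have "D1 * ((- a) * r13) \<le> D1 * (b * c3)" by (simp add: algebra_simps)
  then have "(- a) * r13 \<le> b * c3" using D(1) by (rule mult_left_le_imp_le)
  then show "a * (- r13) + b * (- c3) \<le> 0" by simp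
qed

lemma mu_signs:
  fixes c1 r12 r13 c3 r31 r32 D1 D3 a b t :: int
  assumes nn: "0 \<le> r12" "0 \<le> r31" "0 \<le> r32" "0 \<le> c1"
    and D: "0 < D1" "0 < D3" "D1 * r31 \<le> D3 * c1"
    and t: "a * D1 + b * D3 = t" "1 \<le> t" "t \<le> max D1 D3" "0 < a" "a \<le> D3"
  shows "0 \<le> a * c1 + b * r31" "a * (- r12) + b * r32 \<le> 0"
proof -
  have b0: "b \<le> 0"
  proof (cases "D3 \<ge> D1")
    case True
    then have "b * D3 < 1 * D3" using t D by (smt (verit) mult_le_cancel_right1)
    then show ?thesis using D by (simp add: mult_less_cancel_right)
  next
    case False
    then have "t \<le> a * D1" using t D by (smt (verit) mult_le_cancel_right1)
    then have "b * D3 \<le> 0" using t by simp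
    then show ?thesis using D by (smt (verit) mult_pos_pos)
  qed
  have "0 \<le> (- b) * r32" using b0 nn by (simp add: mult_nonpos_nonneg)
  moreover have "0 \<le> a * r12" using t nn by simp
  ultimately show "a * (- r12) + b * r32 \<le> 0" by simp
  have A: "(- b) * D3 \<le> a * D1" using t by linarith
  have "(- b) * D3 * r31 \<le> a * D1 * r31" using mult_right_mono[OF A nn(2)] .
  also have "\<dots> = a * (D1 * r31)" by simp
  also have "\<dots> \<le> a * (D3 * c1)" using D t by (simp add: mult_left_mono)
  finally have "D3 * ((- b) * r31) \<le> D3 * (a * c1)" by (simp add: algebra_simps)
  then have "(- b) * r31 \<le> a * c1" using D(2) by (rule mult_left_le_imp_le)
  then show "0 \<le> a * c1 + b * r31" by simp
qed




lemma nd: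
  fixes x y z :: nat
  assumes "0 < x" "0 < y" "0 < z" "gcd x (gcd y z) = 1" "\<not> symmetric_sg (sg3 x y z)"
  shows "\<forall>k. cc x y z * x \<noteq> k * y"
proof (intro allI notI)
  fix k assume "cc x y z * x = k * y"
  then have "symmetric_sg (sg3 x y z)" by (rule sym_lemma[OF assms(1-4)])
  then show False using assms(5) by simp
qed

lemma tau_Tf:
  "tau n1 n2 n3 p = Tf (int (cc n1 n2 n3)) (int (fst (rr n1 n2 n3))) (int (snd (rr n1 n2 n3)))
      (int (cc n3 n1 n2)) (int (fst (rr n3 n1 n2))) (int (snd (rr n3 n1 n2))) p"
  unfolding tau_def v1_def v3_def Tf_def by (cases p) simp

lemma Tf_add:
  "Tf c1 r12 r13 c3 r31 r32 (a + a', b + b') =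
    (case (Tf c1 r12 r13 c3 r31 r32 (a, b), Tf c1 r12 r13 c3 r31 r32 (a', b')) of
       ((p1, p2, p3), (q1, q2, q3)) \<Rightarrow> (p1 + q1, p2 + q2, p3 + q3))"
  unfolding Tf_def by (simp add: algebra_simps)

theorem lemma2p14:
  fixes n1 n2 n3 :: nat and x :: "int \<Rightarrow> int \<times> int" and i :: int
  assumes "0 < n1" and "n1 < n2" and "n2 < n3"
    and "gcd n1 (gcd n2 n3) = 1"
    and "minimally_generated n1 n2 n3"
    and "\<not> symmetric_sg (sg3 n1 n2 n3)"
    and "gcd (delta1 n1 n2 n3) (delta3 n1 n2 n3) = 1"
    and "x \<in> {lam n1 n2 n3, mu n1 n2 n3}"
    and "1 \<le> i" and "i \<le> max (delta1 n1 n2 n3) (delta3 n1 n2 n3)"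
    and "reducible x (max (delta1 n1 n2 n3) (delta3 n1 n2 n3)) i"
  shows "\<exists>l. 0 < l \<and> l < i \<and>
           le3 (pos_part (tau n1 n2 n3 (x l))) (pos_part (tau n1 n2 n3 (x i)))"
proof -
  note A = assms
  have p1: "0 < n1" and p2: "0 < n2" and p3: "0 < n3" using A(1-3) by simp_all
  have g: "gcd n1 (gcd n2 n3) = 1" "gcd n1 (gcd n3 n2) = 1" "gcd n2 (gcd n1 n3) = 1"
      "gcd n2 (gcd n3 n1) = 1" "gcd n3 (gcd n1 n2) = 1" "gcd n3 (gcd n2 n1) = 1"
    using A(4) by (simp_all add: gcd.commute gcd.left_commute)
  have ns: "\<not> symmetric_sg (sg3 n1 n2 n3)" "\<not> symmetric_sg (sg3 n1 n3 n2)"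
      "\<not> symmetric_sg (sg3 n2 n1 n3)" "\<not> symmetric_sg (sg3 n2 n3 n1)"
      "\<not> symmetric_sg (sg3 n3 n1 n2)" "\<not> symmetric_sg (sg3 n3 n2 n1)"
    using A(6) sg3_perm1 sg3_perm2 by (simp_all only:) (metis sg3_perm1 sg3_perm2)+
  have h123: "\<forall>k. cc n1 n2 n3 * n1 \<noteq> k * n2" by (rule nd[OF p1 p2 p3 g(1) ns(1)])
  have h132: "\<forall>k. cc n1 n2 n3 * n1 \<noteq> k * n3" using nd[OF p1 p3 p2 g(2) ns(2)] by (simp add: cc_comm)
  have h213: "\<forall>k. cc n2 n1 n3 * n2 \<noteq> k * n3" using nd[OF p2 p3 p1 g(4) ns(4)] by (simp add: cc_comm)
  have h312: "\<forall>k. cc n3 n1 n2 * n3 \<noteq> k * n2" using nd[OF p3 p2 p1 g(6) ns(6)] by (simp add: cc_comm)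
  have h3121: "\<forall>k. cc n3 n1 n2 * n3 \<noteq> k * n1" by (rule nd[OF p3 p1 p2 g(5) ns(5)])
  have h132': "\<forall>k. cc n1 n3 n2 * n1 \<noteq> k * n2" using nd[OF p1 p2 p3 g(1) ns(1)] by (simp add: cc_comm)
  have h231: "\<forall>k. cc n2 n3 n1 * n2 \<noteq> k * n1" using nd[OF p2 p1 p3 g(3) ns(3)] by (simp add: cc_comm)
  have R1: "0 < fst (rr n1 n2 n3) \<and> 0 < snd (rr n1 n2 n3) \<and>
      cc n1 n2 n3 * n1 = fst (rr n1 n2 n3) * n2 + snd (rr n1 n2 n3) * n3"
    by (rule rr_props[OF p1 p2 p3 h123 h132 h213 h312])
  have R3: "0 < fst (rr n3 n1 n2) \<and> 0 < snd (rr n3 n1 n2) \<and>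
      cc n3 n1 n2 * n3 = fst (rr n3 n1 n2) * n1 + snd (rr n3 n1 n2) * n2"
    by (rule rr_props[OF p3 p1 p2 h3121 h312 h132' h231])
  define c1 where "c1 = int (cc n1 n2 n3)"
  define c3 where "c3 = int (cc n3 n1 n2)"
  define r12 where "r12 = int (fst (rr n1 n2 n3))"
  define r13 where "r13 = int (snd (rr n1 n2 n3))"
  define r31 where "r31 = int (fst (rr n3 n1 n2))"
  define r32 where "r32 = int (snd (rr n3 n1 n2))"
  have c1p: "0 < c1" unfolding c1_def using cc_props(1)[OF p1 p2] by simp
  have c3p: "0 < c3" unfolding c3_def using cc_props(1)[OF p3 p1] by simp
  have rp: "0 < r12" "0 < r13" "0 < r31" "0 < r32"
    using R1 R3 unfolding r12_def r13_def r31_def r32_def by simp_all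
  have E1: "c1 * int n1 = r12 * int n2 + r13 * int n3"
  proof -
    have "int (cc n1 n2 n3 * n1) = int (fst (rr n1 n2 n3) * n2 + snd (rr n1 n2 n3) * n3)" using R1 by simp
    then show ?thesis unfolding c1_def r12_def r13_def by simp
  qed
  have E3: "c3 * int n3 = r31 * int n1 + r32 * int n2"
  proof -
    have "int (cc n3 n1 n2 * n3) = int (fst (rr n3 n1 n2) * n1 + snd (rr n3 n1 n2) * n2)" using R3 by simp
    then show ?thesis unfolding c3_def r31_def r32_def by simp
  qed
  define D1 where "D1 = delta1 n1 n2 n3"
  define D3 where "D3 = delta3 n1 n2 n3"
  have D1e: "D1 = c1 - r12 - r13" unfolding D1_def delta1_def c1_def r12_def r13_def ..
  have D3e: "D3 = r31 + r32 - c3" unfolding D3_def delta3_def c3_def r31_def r32_def ..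
  have N: "0 < int n1" "int n1 < int n2" "int n2 < int n3" using A(1-3) by simp_all
  note K = core[OF N rp c1p c3p E1 E3, folded D1e D3e]
  have gD: "gcd D1 D3 = 1" using A(7) unfolding D1_def D3_def .
  have T: "\<And>p. tau n1 n2 n3 p = Tf c1 r12 r13 c3 r31 r32 p"
    unfolding c1_def c3_def r12_def r13_def r31_def r32_def by (rule tau_Tf)
  define m where "m = max D1 D3"
  obtain j k where jk: "j \<in> {1..m}" "k \<in> {1..m}"
    "x i = (fst (x j) + fst (x k), snd (x j) + snd (x k))"
    using A(11) unfolding reducible_def m_def D1_def D3_def by blast
  have im: "1 \<le> i" "i \<le> m" using A(9,10) unfolding m_def D1_def D3_def by auto
  from A(8) consider (L) "x = lam n1 n2 n3" | (M) "x = mu n1 n2 n3" by blast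
  then show ?thesis
  proof cases
    case L
    have P: "fst (x t) * D1 + snd (x t) * D3 = t \<and> 0 < snd (x t) \<and> snd (x t) \<le> D1" for t
    proof -
      have "(\<lambda>(a, b). a * D1 + b * D3 = t \<and> 0 < b \<and> b \<le> D1) (x t)"
        unfolding L lam_def D1_def[symmetric] D3_def[symmetric]
        by (rule theI'[OF lam_ex1[OF K(1) gD]])
      then show ?thesis by (cases "x t") simp
    qed
    have "i = j + k" using P[of i] P[of j] P[of k] jk(3) by (simp add: algebra_simps)
    then have lt: "0 < j" "j < i" "0 < k" "k < i" using jk by auto
    have jb: "1 \<le> j" "j \<le> max D1 D3" using jk m_def by auto
    have sj: "0 \<le> fst (x j) * (- r12) + snd (x j) * r32" "fst (x j) * (- r13) + snd (x j) * (- c3) \<le> 0"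
      using lam_signs[OF less_imp_le[OF rp(1)] less_imp_le[OF rp(2)] less_imp_le[OF rp(4)] less_imp_le[OF c3p] K(1) K(2) K(3) conjunct1[OF P[of j]] jb conjunct1[OF conjunct2[OF P[of j]]] conjunct2[OF conjunct2[OF P[of j]]]] .
    have kb: "1 \<le> k" "k \<le> max D1 D3" using jk m_def by auto
    have sk: "0 \<le> fst (x k) * (- r12) + snd (x k) * r32" "fst (x k) * (- r13) + snd (x k) * (- c3) \<le> 0"
      using lam_signs[OF less_imp_le[OF rp(1)] less_imp_le[OF rp(2)] less_imp_le[OF rp(4)] less_imp_le[OF c3p] K(1) K(2) K(3) conjunct1[OF P[of k]] kb conjunct1[OF conjunct2[OF P[of k]]] conjunct2[OF conjunct2[OF P[of k]]]] .
    have "le3 (pos_part (tau n1 n2 n3 (x j))) (pos_part (tau n1 n2 n3 (x i))) \<or>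
          le3 (pos_part (tau n1 n2 n3 (x k))) (pos_part (tau n1 n2 n3 (x i)))"
    proof -
      obtain aj bj where xj: "x j = (aj, bj)" by (cases "x j")
      obtain ak bk where xk: "x k = (ak, bk)" by (cases "x k")
      have tj: "tau n1 n2 n3 (x j) = (aj*c1 + bj*r31, aj*(-r12) + bj*r32, aj*(-r13) + bj*(-c3))"
        by (simp add: T Tf_def xj)
      have tk: "tau n1 n2 n3 (x k) = (ak*c1 + bk*r31, ak*(-r12) + bk*r32, ak*(-r13) + bk*(-c3))"
        by (simp add: T Tf_def xk)
      have ti: "tau n1 n2 n3 (x i) = ((aj*c1 + bj*r31) + (ak*c1 + bk*r31),
           (aj*(-r12) + bj*r32) + (ak*(-r12) + bk*r32), (aj*(-r13) + bj*(-c3)) + (ak*(-r13) + bk*(-c3)))"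
        by (simp add: T Tf_def jk(3) xj xk algebra_simps)
      show ?thesis unfolding tj tk ti by (rule pick_lam) (use sj sk xj xk in simp_all)
    qed
    then show ?thesis using lt by blast
  next
    case M
    have P: "fst (x t) * D1 + snd (x t) * D3 = t \<and> 0 < fst (x t) \<and> fst (x t) \<le> D3" for t
    proof -
      have "(\<lambda>(a, b). a * D1 + b * D3 = t \<and> 0 < a \<and> a \<le> D3) (x t)"
        unfolding M mu_def D1_def[symmetric] D3_def[symmetric]
        by (rule theI'[OF mu_ex1[OF K(2) gD]])
      then show ?thesis by (cases "x t") simp
    qed
    have "i = j + k" using P[of i] P[of j] P[of k] jk(3) by (simp add: algebra_simps)
    then have lt: "0 < j" "j < i" "0 < k" "k < i" using jk by auto
    have jb: "1 \<le> j" "j \<le> max D1 D3" using jk m_def by auto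
    have sj: "0 \<le> fst (x j) * c1 + snd (x j) * r31" "fst (x j) * (- r12) + snd (x j) * r32 \<le> 0"
      using mu_signs[OF less_imp_le[OF rp(1)] less_imp_le[OF rp(3)] less_imp_le[OF rp(4)] less_imp_le[OF c1p] K(1) K(2) K(4) conjunct1[OF P[of j]] jb conjunct1[OF conjunct2[OF P[of j]]] conjunct2[OF conjunct2[OF P[of j]]]] .
    have kb: "1 \<le> k" "k \<le> max D1 D3" using jk m_def by auto
    have sk: "0 \<le> fst (x k) * c1 + snd (x k) * r31" "fst (x k) * (- r12) + snd (x k) * r32 \<le> 0"
      using mu_signs[OF less_imp_le[OF rp(1)] less_imp_le[OF rp(3)] less_imp_le[OF rp(4)] less_imp_le[OF c1p] K(1) K(2) K(4) conjunct1[OF P[of k]] kb conjunct1[OF conjunct2[OF P[of k]]] conjunct2[OF conjunct2[OF P[of k]]]] .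
    have "le3 (pos_part (tau n1 n2 n3 (x j))) (pos_part (tau n1 n2 n3 (x i))) \<or>
          le3 (pos_part (tau n1 n2 n3 (x k))) (pos_part (tau n1 n2 n3 (x i)))"
    proof -
      obtain aj bj where xj: "x j = (aj, bj)" by (cases "x j")
      obtain ak bk where xk: "x k = (ak, bk)" by (cases "x k")
      have tj: "tau n1 n2 n3 (x j) = (aj*c1 + bj*r31, aj*(-r12) + bj*r32, aj*(-r13) + bj*(-c3))"
        by (simp add: T Tf_def xj)
      have tk: "tau n1 n2 n3 (x k) = (ak*c1 + bk*r31, ak*(-r12) + bk*r32, ak*(-r13) + bk*(-c3))"
        by (simp add: T Tf_def xk)
      have ti: "tau n1 n2 n3 (x i) = ((aj*c1 + bj*r31) + (ak*c1 + bk*r31),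
           (aj*(-r12) + bj*r32) + (ak*(-r12) + bk*r32), (aj*(-r13) + bj*(-c3)) + (ak*(-r13) + bk*(-c3)))"
        by (simp add: T Tf_def jk(3) xj xk algebra_simps)
      show ?thesis unfolding tj tk ti by (rule pick_mu) (use sj sk xj xk in simp_all)
    qed
    then show ?thesis using lt by blast
  qed
qed


end
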